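(* Suppose $f\in M^1$ satisfies $\Vert V_\varphi f\Vert_1=1$, and that $\Delta\subset\mathbb{R}^2$ (measurable) and $\varepsilon\ge0$ are such that \[ 1-\varepsilon\le\int_\Delta |V_\varphi f(x,\omega)|\,dx\,d\omega. \] Then \[ 1-\varepsilon\le\inf_{R>0}\left(\frac{\rho(\Delta,R)}{1-e^{-\pi/R^2}}\right)\le|\Delta|. \]
   Context: Let $\varphi(t)=2^{1/4}e^{-\pi t^2}$. The STFT is $V_\varphi f(x,\omega)=\int_{\mathbb{R}} f(t)\overline{\varphi(t-x)}e^{-2\pi i \omega t}\,dt$. The modulation space $M^1$ is $\{f\in\mathcal{S}'(\mathbb{R}): \Vert V_\varphi f\Vert_{1}<\infty\}$, with $\Vert\cdot\Vert_1$ the $L^1(\mathbb{R}^2)$ norm. The planar maximum Nyquist density is $\rho(\Delta,R):=\sup_{z\in\mathbb{R}^2}|\Delta\cap(z+D_{1/R})|$, with $D_{1/R}$ the disc of radius $1/R$ centered at the origin and $|\cdot|$ Lebesgue measure. *)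

theory Defs
  imports "HOL-Analysis.Analysis"
begin

definition gwin :: "real \<Rightarrow> real" where
  "gwin t = 2 powr (1/4) * exp (- pi * t^2)"

definition STFT :: "(real \<Rightarrow> complex) \<Rightarrow> real \<times> real \<Rightarrow> complex" where
  "STFT f z = (LINT t|lborel. f t * cnj (complex_of_real (gwin (t - fst z)))
                 * exp (- 2 * pi * \<i> * complex_of_real (snd z * t)))"

text \<open>Elements of M^1 are (identified with) square-integrable functions whose STFT is in L^1(R^2).\<close>
definition M1 :: "(real \<Rightarrow> complex) set" where
  "M1 = {f. f \<in> borel_measurable lborel \<and> integrable lborel (\<lambda>t. (norm (f t))^2)
            \<and> integrable lebesgue (\<lambda>z. norm (STFT f z))}"

definition L1norm_STFT :: "(real \<Rightarrow> complex) \<Rightarrow> real" where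
  "L1norm_STFT f = (LINT z|lebesgue. norm (STFT f z))"

definition nyquist_rho :: "(real \<times> real) set \<Rightarrow> real \<Rightarrow> real" where
  "nyquist_rho D R = (SUP z. measure lebesgue (D \<inter> ball z (1/R)))"

end

theory Submission
  imports Defs "HOL-Complex_Analysis.Cauchy_Integral_Formula" "HOL-Probability.Distributions"
begin


lemma shear_x_distr:
  "distr lborel borel (\<lambda>p::real\<times>real. (fst p + a * snd p, snd p)) = lborel"
proof (rule measure_eqI)
  show "sets (distr lborel borel (\<lambda>p::real\<times>real. (fst p + a * snd p, snd p))) = sets lborel" by simp
next
  fix A :: "(real\<times>real) set" assume "A \<in> sets (distr lborel borel (\<lambda>p::real\<times>real. (fst p + a * snd p, snd p)))"
  then have A[measurable]: "A \<in> sets borel" by simp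
  have A2[measurable]: "A \<in> sets (lborel \<Otimes>\<^sub>M lborel)" by (subst lborel_prod) (simp add: A)
  have "emeasure (distr lborel borel (\<lambda>p::real\<times>real. (fst p + a * snd p, snd p))) A
      = (\<integral>\<^sup>+p. indicator A (fst p + a * snd p, snd p) \<partial>lborel)"
  proof -
    have mS[measurable]: "(\<lambda>p::real\<times>real. (fst p + a * snd p, snd p)) \<in> borel \<rightarrow>\<^sub>M borel"
      by (intro borel_measurable_continuous_onI continuous_intros)
    have "emeasure (distr lborel borel (\<lambda>p::real\<times>real. (fst p + a * snd p, snd p))) A = emeasure lborel ((\<lambda>p::real\<times>real. (fst p + a * snd p, snd p)) -` A \<inter> space lborel)"
      by (rule emeasure_distr) auto
    also have "\<dots> = (\<integral>\<^sup>+p. indicator ((\<lambda>p::real\<times>real. (fst p + a * snd p, snd p)) -` A \<inter> space lborel) p \<partial>lborel)"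
      by (rule nn_integral_indicator[symmetric]) (use measurable_sets[OF mS A] in simp)
    finally show ?thesis by (simp add: indicator_def)
  qed
  also have "\<dots> = (\<integral>\<^sup>+p. indicator A (fst p + a * snd p, snd p) \<partial>(lborel \<Otimes>\<^sub>M lborel))"
    by (simp add: lborel_prod)
  also have "\<dots> = (\<integral>\<^sup>+y. \<integral>\<^sup>+x. indicator A (x + a * y, y) \<partial>lborel \<partial>lborel)"
    by (subst lborel_pair.nn_integral_snd[symmetric]) auto
  also have "\<dots> = (\<integral>\<^sup>+y. \<integral>\<^sup>+x. indicator A (x, y) \<partial>lborel \<partial>lborel)"
  proof (rule nn_integral_cong)
    fix y :: real
    show "(\<integral>\<^sup>+x. indicator A (x + a * y, y) \<partial>lborel) = (\<integral>\<^sup>+x. indicator A (x, y) \<partial>lborel)"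
      using nn_integral_real_affine[of "\<lambda>x. indicator A (x, y)" 1 "a*y"] by (simp add: add.commute)
  qed
  also have "\<dots> = (\<integral>\<^sup>+p. indicator A p \<partial>(lborel \<Otimes>\<^sub>M lborel))"
    by (subst lborel_pair.nn_integral_snd[symmetric]) auto
  also have "\<dots> = emeasure lborel A"
    by (simp add: lborel_prod)
  finally show "emeasure (distr lborel borel (\<lambda>p::real\<times>real. (fst p + a * snd p, snd p))) A = emeasure lborel A" .
qed

lemma shear_y_distr:
  "distr lborel borel (\<lambda>p::real\<times>real. (fst p, snd p + b * fst p)) = lborel"
proof (rule measure_eqI)
  show "sets (distr lborel borel (\<lambda>p::real\<times>real. (fst p, snd p + b * fst p))) = sets lborel" by simp
next
  fix A :: "(real\<times>real) set" assume "A \<in> sets (distr lborel borel (\<lambda>p::real\<times>real. (fst p, snd p + b * fst p)))"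
  then have A[measurable]: "A \<in> sets borel" by simp
  have A2[measurable]: "A \<in> sets (lborel \<Otimes>\<^sub>M lborel)" by (subst lborel_prod) (simp add: A)
  have "emeasure (distr lborel borel (\<lambda>p::real\<times>real. (fst p, snd p + b * fst p))) A
      = (\<integral>\<^sup>+p. indicator A (fst p, snd p + b * fst p) \<partial>lborel)"
  proof -
    have mS[measurable]: "(\<lambda>p::real\<times>real. (fst p, snd p + b * fst p)) \<in> borel \<rightarrow>\<^sub>M borel"
      by (intro borel_measurable_continuous_onI continuous_intros)
    have "emeasure (distr lborel borel (\<lambda>p::real\<times>real. (fst p, snd p + b * fst p))) A = emeasure lborel ((\<lambda>p::real\<times>real. (fst p, snd p + b * fst p)) -` A \<inter> space lborel)"
      by (rule emeasure_distr) auto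
    also have "\<dots> = (\<integral>\<^sup>+p. indicator ((\<lambda>p::real\<times>real. (fst p, snd p + b * fst p)) -` A \<inter> space lborel) p \<partial>lborel)"
      by (rule nn_integral_indicator[symmetric]) (use measurable_sets[OF mS A] in simp)
    finally show ?thesis by (simp add: indicator_def)
  qed
  also have "\<dots> = (\<integral>\<^sup>+p. indicator A (fst p, snd p + b * fst p) \<partial>(lborel \<Otimes>\<^sub>M lborel))"
    by (simp add: lborel_prod)
  also have "\<dots> = (\<integral>\<^sup>+x. \<integral>\<^sup>+y. indicator A (x, y + b * x) \<partial>lborel \<partial>lborel)"
    by (subst lborel.nn_integral_fst[symmetric]) auto
  also have "\<dots> = (\<integral>\<^sup>+x. \<integral>\<^sup>+y. indicator A (x, y) \<partial>lborel \<partial>lborel)"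
  proof (rule nn_integral_cong)
    fix x :: real
    show "(\<integral>\<^sup>+y. indicator A (x, y + b * x) \<partial>lborel) = (\<integral>\<^sup>+y. indicator A (x, y) \<partial>lborel)"
      using nn_integral_real_affine[of "\<lambda>y. indicator A (x, y)" 1 "b*x"] by (simp add: add.commute)
  qed
  also have "\<dots> = (\<integral>\<^sup>+p. indicator A p \<partial>(lborel \<Otimes>\<^sub>M lborel))"
    by (subst lborel.nn_integral_fst[symmetric]) auto
  also have "\<dots> = emeasure lborel A"
    by (simp add: lborel_prod)
  finally show "emeasure (distr lborel borel (\<lambda>p::real\<times>real. (fst p, snd p + b * fst p))) A = emeasure lborel A" .
qed

definition rot :: "real \<Rightarrow> real \<Rightarrow> real\<times>real \<Rightarrow> real\<times>real" where
  "rot c s p = (c * fst p + s * snd p, - s * fst p + c * snd p)"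

lemma rot_distr:
  assumes cs: "c^2 + s^2 = 1" and c: "c \<noteq> -1"
  shows "distr lborel borel (rot c s) = lborel"
proof -
  have "c \<ge> -1"
  proof (rule ccontr)
    assume "\<not> c \<ge> -1"
    then have "1 < (-c) * (-c)" by (intro less_1_mult) auto
    moreover have "0 \<le> s * s" by simp
    ultimately show False using cs unfolding power2_eq_square by linarith
  qed
  then have pc: "1 + c > 0" using c by simp
  define al where "al = s / (1 + c)"
  define Sx where "Sx = (\<lambda>p::real\<times>real. (fst p + al * snd p, snd p))"
  define Sy where "Sy = (\<lambda>p::real\<times>real. (fst p, snd p + (-s) * fst p))"
  have eq: "rot c s = Sx \<circ> (Sy \<circ> Sx)"
  proof
    fix p :: "real\<times>real"
    obtain x y where p: "p = (x,y)" by (cases p)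
    have ss: "s * s = (1-c)*(1+c)" using cs unfolding power2_eq_square by (simp add: algebra_simps; linarith)
    have e3: "s * al = 1 - c" unfolding al_def using pc ss
      by (metis (no_types, lifting) nonzero_mult_div_cancel_right order_less_irrefl times_divide_eq_right)
    have e1: "1 + al * (-s) = c" using e3 by (simp add: algebra_simps)
    have e4: "1 + (-s) * al = c" using e3 by simp
    have e2: "al + al * c = s"
    proof -
      have "al + al * c = al * (1 + c)" by (simp add: algebra_simps)
      also have "\<dots> = s" unfolding al_def using pc by simp
      finally show ?thesis .
    qed
    have "(Sx \<circ> (Sy \<circ> Sx)) p = (x * (1 + al * (-s)) + y * (al + al * (1 + (-s) * al)), (-s) * x + (1 + (-s)*al) * y)"
      by (simp add: Sx_def Sy_def p algebra_simps)
    also have "\<dots> = rot c s p"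
      using e1 e3 by (simp only: e1 e2 e4 rot_def p fst_conv snd_conv) (simp add: algebra_simps)
    finally show "rot c s p = (Sx \<circ> (Sy \<circ> Sx)) p" by simp
  qed
  have mSx[measurable]: "Sx \<in> borel_measurable borel" unfolding Sx_def by (intro borel_measurable_continuous_onI continuous_intros)
  have mSy[measurable]: "Sy \<in> borel_measurable borel" unfolding Sy_def by (intro borel_measurable_continuous_onI continuous_intros)
  have "distr lborel borel (Sx \<circ> (Sy \<circ> Sx)) = distr (distr lborel borel (Sy \<circ> Sx)) borel Sx"
    by (subst distr_distr) auto
  also have "distr lborel borel (Sy \<circ> Sx) = distr (distr lborel borel Sx) borel Sy"
    by (subst distr_distr) auto
  also have "distr lborel borel Sx = lborel" unfolding Sx_def by (rule shear_x_distr)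
  also have "distr lborel borel Sy = lborel" unfolding Sy_def by (rule shear_y_distr)
  also have "distr lborel borel Sx = lborel" unfolding Sx_def by (rule shear_x_distr)
  finally show ?thesis using eq by (simp add: comp_def)
qed



definition zeta :: "real\<times>real \<Rightarrow> complex" where
  "zeta w = complex_of_real (fst w) - \<i> * complex_of_real (snd w)"

lemma norm_zeta: "norm (zeta w) = norm w"
proof -
  obtain x y where w: "w = (x,y)" by (cases w)
  have "zeta w = Complex x (-y)" by (simp add: zeta_def w complex_eq_iff)
  then show ?thesis by (simp add: w norm_Pair cmod_def)
qed

lemma zeta_rot: "zeta (rot c s w) = (complex_of_real c + \<i> * complex_of_real s) * zeta w"
  by (simp add: zeta_def rot_def complex_eq_iff algebra_simps)

lemma norm_rot: assumes "c^2 + s^2 = 1" shows "norm (rot c s w) = norm w"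
proof -
  have "norm (rot c s w) = norm (zeta (rot c s w))" by (simp add: norm_zeta)
  also have "\<dots> = norm (complex_of_real c + \<i> * complex_of_real s) * norm w"
    by (simp add: zeta_rot norm_mult norm_zeta)
  also have "norm (complex_of_real c + \<i> * complex_of_real s) = 1"
  proof -
    have "complex_of_real c + \<i> * complex_of_real s = Complex c s" by (simp add: complex_eq_iff)
    then show ?thesis using assms by (simp add: cmod_def)
  qed
  finally show ?thesis by simp
qed

lemma rot_measurable[measurable]: "rot c s \<in> borel_measurable borel"
  unfolding rot_def by (intro borel_measurable_continuous_onI continuous_intros)

lemma zeta_measurable[measurable]: "zeta \<in> borel_measurable borel"
  unfolding zeta_def by (intro borel_measurable_continuous_onI continuous_intros)

lemma circle_mean:
  fixes h :: "complex \<Rightarrow> complex"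
  assumes h: "h holomorphic_on UNIV"
  shows "(LINT \<theta>:{0..2*pi}|lborel. h (cis \<theta> * a)) = 2 * pi * h 0"
proof -
  define g where "g = (\<lambda>u. h (a * u))"
  have g: "g holomorphic_on UNIV"
  proof -
    have "(h \<circ> (\<lambda>u. a * u)) holomorphic_on UNIV"
      by (rule holomorphic_on_compose) (auto intro!: holomorphic_intros holomorphic_on_subset[OF h])
    then show ?thesis by (simp add: g_def o_def)
  qed
  have "((\<lambda>u. g u / (u - 0)) has_contour_integral (2 * of_real pi * \<i> * g 0)) (circlepath 0 1)"
    by (rule Cauchy_integral_circlepath_simple) (auto intro: holomorphic_on_subset[OF g])
  then have "((\<lambda>t. g (0 + 1 * cis t) / (0 + 1 * cis t - 0) * 1 * \<i> * cis t) has_integral (2 * of_real pi * \<i> * g 0)) {0..2*pi}"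
    unfolding circlepath_def by (subst (asm) has_contour_integral_part_circlepath_iff) auto
  then have "((\<lambda>t. \<i> * g (cis t)) has_integral (2 * of_real pi * \<i> * g 0)) {0..2*pi}"
    by (rule has_integral_eq[rotated]) (simp add: cis_neq_zero)
  from has_integral_mult_right[OF this, of "-\<i>"]
  have I: "((\<lambda>t. g (cis t)) has_integral (2 * pi * g 0)) {0..2*pi}"
    by (simp add: algebra_simps)
  have cont: "continuous_on {0..2*pi} (\<lambda>t. g (cis t))"
    by (intro continuous_on_compose2[OF holomorphic_on_imp_continuous_on[OF g]] continuous_intros) auto
  have "(LINT \<theta>:{0..2*pi}|lborel. g (cis \<theta>)) = integral {0..2*pi} (\<lambda>t. g (cis t))"
    by (rule set_borel_integral_eq_integral(2)) (rule borel_integrable_atLeastAtMost'[OF cont])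
  also have "\<dots> = 2 * pi * g 0" using I by (rule integral_unique)
  finally show ?thesis by (simp add: g_def mult.commute)
qed



lemma cos_minus1_in: assumes "cos t = -1" "0 \<le> t" "t \<le> 2*pi" shows "t = pi"
proof -
  obtain n :: int where n: "t = (2*n+1)*pi" using assms(1) cos_eq_minus1 by auto
  have "0 \<le> (2*n+1)*pi" "(2*n+1)*pi \<le> 2*pi" using n assms by auto
  then have "0 \<le> real_of_int (2*n+1)" "real_of_int (2*n+1) \<le> 2"
    using pi_gt_zero by (auto simp: zero_le_mult_iff mult_le_cancel_right)
  then have "0 \<le> 2*n+1" "2*n+1 \<le> 2" by linarith+
  then have "n = 0" by linarith
  then show ?thesis using n by simp
qed

lemma cis_measurable[measurable]: "cis \<in> borel_measurable borel"
  by (intro borel_measurable_continuous_onI continuous_intros)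

lemma zeta_measurable_lborel[measurable]: "zeta \<in> borel_measurable lborel"
  using zeta_measurable by (simp add: measurable_lborel1)

lemma disc_mean:
  fixes h :: "complex \<Rightarrow> complex" and \<psi> :: "real\<times>real \<Rightarrow> real" and r :: real
  assumes h: "h holomorphic_on UNIV"
    and \<psi>rot: "\<And>c s w. c^2 + s^2 = 1 \<Longrightarrow> \<psi> (rot c s w) = \<psi> w"
    and \<psi>m[measurable]: "\<psi> \<in> borel_measurable borel"
    and \<psi>b: "\<And>w. \<psi> w \<noteq> 0 \<Longrightarrow> norm w \<le> r"
    and \<psi>1: "\<And>w. \<bar>\<psi> w\<bar> \<le> 1"
  shows "(\<integral>w. \<psi> w *\<^sub>R h (zeta w) \<partial>lborel) = (\<integral>w. \<psi> w \<partial>lborel) *\<^sub>R h 0"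
proof -
  have hc: "continuous_on UNIV h" using h by (rule holomorphic_on_imp_continuous_on)
  have hm[measurable]: "h \<in> borel_measurable borel" using hc by (rule borel_measurable_continuous_onI)
  have "compact (h ` cball 0 r)"
    by (intro compact_continuous_image continuous_on_subset[OF hc]) auto
  then obtain M0 where M0: "\<And>u. u \<in> cball 0 r \<Longrightarrow> norm (h u) \<le> M0"
    using compact_imp_bounded bounded_iff by (metis image_eqI)
  define M where "M = max M0 0"
  have M: "\<And>u. norm u \<le> r \<Longrightarrow> norm (h u) \<le> M" "M \<ge> 0"
    using M0 unfolding M_def by (auto simp: dist_norm intro: max.coboundedI1)
  have \<psi>int: "integrable lborel \<psi>"
  proof (rule Bochner_Integration.integrable_bound[where f="indicator (cball (0::real\<times>real) r) :: _ \<Rightarrow> real"])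
    show "integrable lborel (indicator (cball (0::real\<times>real) r) :: _ \<Rightarrow> real)"
      using emeasure_bounded_finite[of "cball (0::real\<times>real) r"] by (intro integrable_real_indicator) auto
    show "AE x in lborel. norm (\<psi> x) \<le> norm (indicator (cball (0::real\<times>real) r) x :: real)"
    proof (rule AE_I2)
      fix x show "norm (\<psi> x) \<le> norm (indicator (cball (0::real\<times>real) r) x :: real)"
        using \<psi>1[of x] \<psi>b[of x] by (cases "\<psi> x = 0") (auto simp: indicator_def dist_norm)
    qed
  qed simp
  define J where "J = (\<integral>w. \<psi> w *\<^sub>R h (zeta w) \<partial>lborel)"
  define \<Phi> where "\<Phi> = (\<lambda>(\<theta>::real) (w::real\<times>real). indicator {0..2*pi} \<theta> *\<^sub>R (\<psi> w *\<^sub>R h (cis \<theta> * zeta w)))"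
  have \<Phi>m[measurable]: "case_prod \<Phi> \<in> borel_measurable (lborel \<Otimes>\<^sub>M lborel)"
    unfolding \<Phi>_def by measurable
  have int: "integrable (lborel \<Otimes>\<^sub>M lborel) (case_prod \<Phi>)"
  proof (rule Bochner_Integration.integrable_bound[where f="\<lambda>x. indicator ({0..2*pi} \<times> cball (0::real\<times>real) r) x * M"])
    have fin: "emeasure (lborel \<Otimes>\<^sub>M lborel) ({0..2*pi} \<times> cball (0::real\<times>real) r) < \<infinity>"
      using emeasure_bounded_finite[of "cball (0::real\<times>real) r"]
      by (simp add: lborel.emeasure_pair_measure_Times ennreal_mult_less_top)
    show "integrable (lborel \<Otimes>\<^sub>M lborel) (\<lambda>x. indicator ({0..2*pi} \<times> cball (0::real\<times>real) r) x * M)"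
      using fin by (intro integrable_mult_left integrable_real_indicator) auto
    show "case_prod \<Phi> \<in> borel_measurable (lborel \<Otimes>\<^sub>M lborel)" by (rule \<Phi>m)
    show "AE x in lborel \<Otimes>\<^sub>M lborel. norm (case_prod \<Phi> x) \<le> norm (indicator ({0..2*pi} \<times> cball (0::real\<times>real) r) x * M)"
    proof (rule AE_I2, clarify)
      fix \<theta> :: real and w :: "real\<times>real"
      show "norm (\<Phi> \<theta> w) \<le> norm (indicator ({0..2*pi} \<times> cball (0::real\<times>real) r) (\<theta>, w) * M)"
      proof (cases "\<theta> \<in> {0..2*pi} \<and> \<psi> w \<noteq> 0")
        case True
        then have nw: "norm w \<le> r" using \<psi>b by auto
        have "norm (\<Phi> \<theta> w) = \<bar>\<psi> w\<bar> * norm (h (cis \<theta> * zeta w))"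
          using True by (simp add: \<Phi>_def)
        also have "\<dots> \<le> 1 * M"
          using \<psi>1 M(1)[of "cis \<theta> * zeta w"] nw M(2)
          by (intro mult_mono) (auto simp: norm_mult norm_zeta)
        finally show ?thesis using True nw M(2) by (simp add: indicator_def dist_norm)
      next
        case False
        then have "\<Phi> \<theta> w = 0" by (auto simp: \<Phi>_def)
        then show ?thesis by simp
      qed
    qed
  qed
  have inner1: "(\<integral>\<theta>. \<Phi> \<theta> w \<partial>lborel) = \<psi> w *\<^sub>R (2 * pi * h 0)" for w
  proof -
    have "(\<integral>\<theta>. \<Phi> \<theta> w \<partial>lborel) = (\<integral>\<theta>. \<psi> w *\<^sub>R (indicator {0..2*pi} \<theta> *\<^sub>R h (cis \<theta> * zeta w)) \<partial>lborel)"
      by (simp add: \<Phi>_def mult.commute)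
    also have "\<dots> = \<psi> w *\<^sub>R (LINT \<theta>:{0..2*pi}|lborel. h (cis \<theta> * zeta w))"
      unfolding set_lebesgue_integral_def by (rule integral_scaleR_right)
    also have "\<dots> = \<psi> w *\<^sub>R (2 * pi * h 0)" by (simp add: circle_mean[OF h])
    finally show ?thesis .
  qed
  have inner2: "(\<integral>w. \<Phi> \<theta> w \<partial>lborel) = indicator {0..2*pi} \<theta> *\<^sub>R J" if "\<theta> \<noteq> pi" for \<theta>
  proof (cases "\<theta> \<in> {0..2*pi}")
    case False then show ?thesis by (simp add: \<Phi>_def)
  next
    case True
    define c s where "c = cos \<theta>" and "s = sin \<theta>"
    have cs: "c^2 + s^2 = 1" by (simp add: c_def s_def)
    have c1: "c \<noteq> -1" using cos_minus1_in[of \<theta>] True that by (auto simp: c_def)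
    have cis: "cis \<theta> = complex_of_real c + \<i> * complex_of_real s"
      by (simp add: c_def s_def complex_eq_iff)
    have "(\<integral>w. \<Phi> \<theta> w \<partial>lborel) = (\<integral>w. \<psi> (rot c s w) *\<^sub>R h (zeta (rot c s w)) \<partial>lborel)"
      using True by (simp add: \<Phi>_def \<psi>rot[OF cs] zeta_rot cis)
    also have "\<dots> = (\<integral>w. \<psi> w *\<^sub>R h (zeta w) \<partial>distr lborel borel (rot c s))"
      by (subst integral_distr) auto
    also have "\<dots> = J" by (simp add: rot_distr[OF cs c1] J_def)
    finally show ?thesis using True by simp
  qed
  have "(\<integral>w. (\<integral>\<theta>. \<Phi> \<theta> w \<partial>lborel) \<partial>lborel) = (\<integral>\<theta>. (\<integral>w. \<Phi> \<theta> w \<partial>lborel) \<partial>lborel)"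
    by (rule lborel_pair.Fubini_integral[OF int])
  also have "(\<integral>\<theta>. (\<integral>w. \<Phi> \<theta> w \<partial>lborel) \<partial>lborel) = (\<integral>\<theta>. indicator {0..2*pi} \<theta> *\<^sub>R J \<partial>lborel)"
  proof (rule integral_cong_AE)
    show "AE \<theta> in lborel. (\<integral>w. \<Phi> \<theta> w \<partial>lborel) = indicator {0..2*pi} \<theta> *\<^sub>R J"
      using AE_lborel_singleton[of pi] by eventually_elim (rule inner2)
  qed auto
  also have "\<dots> = (2 * pi) *\<^sub>R J" by simp
  finally have "(2 * pi) *\<^sub>R J = (\<integral>w. \<psi> w *\<^sub>R (2 * pi * h 0) \<partial>lborel)" by (simp add: inner1)
  also have "\<dots> = (\<integral>w. \<psi> w \<partial>lborel) *\<^sub>R (2 * pi * h 0)" by (rule integral_scaleR_left) (use \<psi>int in simp)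
  finally have "(2 * pi) *\<^sub>R J = (2 * pi) *\<^sub>R ((\<integral>w. \<psi> w \<partial>lborel) *\<^sub>R h 0)"
    by (simp add: scaleR_conv_of_real algebra_simps)
  then have "J = (\<integral>w. \<psi> w \<partial>lborel) *\<^sub>R h 0"
    using scaleR_left_imp_eq[of "2*pi" J] pi_gt_zero by fastforce
  then show ?thesis unfolding J_def by simp
qed



definition psi :: "real \<Rightarrow> real\<times>real \<Rightarrow> real" where
  "psi r w = indicator (ball (0::real\<times>real) r) w * exp (- pi * (norm w)^2 / 2)"

lemma psi_measurable[measurable]: "psi r \<in> borel_measurable borel"
  unfolding psi_def
  by (intro borel_measurable_times borel_measurable_indicator borel_measurable_continuous_onI continuous_intros) auto

lemma uv2: "unit_ball_vol 2 = pi" using unit_ball_vol_even[of 1] by simp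

lemma emeasure_ball2: "r \<ge> 0 \<Longrightarrow> emeasure lborel (ball (0::real\<times>real) r) = ennreal (pi * r^2)"
  using emeasure_ball[of r "0::real\<times>real"] by (simp add: uv2 power2_eq_square)

lemma emeasure_cball2: "r \<ge> 0 \<Longrightarrow> emeasure lborel (cball (0::real\<times>real) r) = ennreal (pi * r^2)"
  using emeasure_cball[of r "0::real\<times>real"] by (simp add: uv2 power2_eq_square)

lemma nn_integral_psi:
  assumes r: "r > 0"
  shows "(\<integral>\<^sup>+w. ennreal (psi r w) \<partial>lborel) = ennreal (2 * (1 - exp (- pi * r^2 / 2)))"
proof -
  define a where "a = pi / 2"
  have a: "a > 0" by (simp add: a_def)
  define \<epsilon> where "\<epsilon> = exp (- a * r^2)"
  define g where "g = (\<lambda>s::real. 2 * a * s * exp (- a * s^2))"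
  have gm[measurable]: "g \<in> borel_measurable borel" unfolding g_def by measurable
  have step1: "ennreal (psi r w) = indicator (ball (0::real\<times>real) r) w * ennreal \<epsilon>
      + (\<integral>\<^sup>+s. indicator (ball (0::real\<times>real) r) w * ennreal (g s) * indicator {norm w..r} s \<partial>lborel)" for w :: "real\<times>real"
  proof (cases "w \<in> ball 0 r")
    case False then show ?thesis by (simp add: psi_def)
  next
    case True
    then have nw: "norm w < r" by simp
    have "(\<integral>\<^sup>+s. ennreal (g s) * indicator {norm w..r} s \<partial>lborel)
        = ennreal ((\<lambda>s. - exp (- a * s^2)) r - (\<lambda>s. - exp (- a * s^2)) (norm w))"
    proof (rule nn_integral_FTC_Icc)
      show "g \<in> borel_measurable borel" by (rule gm)
      fix x assume x: "x \<in> {norm w..r}"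
      show "((\<lambda>s. - exp (- a * s^2)) has_real_derivative g x) (at x)"
        unfolding g_def by (auto intro!: derivative_eq_intros simp: algebra_simps)
      have "0 \<le> x" using x by (auto intro: order_trans[OF norm_ge_zero])
      then show "0 \<le> g x" using a unfolding g_def by (auto intro!: mult_nonneg_nonneg)
    next
      show "norm w \<le> r" using nw by simp
    qed
    moreover have "exp (- a * (norm w)^2) \<ge> \<epsilon>"
      unfolding \<epsilon>_def using nw a by (auto intro!: mult_left_mono power_mono)
    ultimately have "ennreal \<epsilon> + (\<integral>\<^sup>+s. ennreal (g s) * indicator {norm w..r} s \<partial>lborel) = ennreal (exp (- a * (norm w)^2))"
      by (simp add: \<epsilon>_def ennreal_plus[symmetric] del: ennreal_plus)
    then show ?thesis using True by (simp add: psi_def a_def)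
  qed
  define F where "F = (\<lambda>p::(real\<times>real)\<times>real. indicator (ball (0::real\<times>real) r) (fst p) * ennreal (g (snd p)) * indicator {norm (fst p)..r} (snd p))"
  have Fm: "F \<in> borel_measurable (lborel \<Otimes>\<^sub>M lborel)"
  proof -
    define S where "S = {p::(real\<times>real)\<times>real. norm (fst p) < r} \<inter> {p. norm (fst p) \<le> snd p} \<inter> {p. snd p \<le> r}"
    have "open {p::(real\<times>real)\<times>real. norm (fst p) < r}"
      by (intro open_Collect_less continuous_intros)
    moreover have "closed {p::(real\<times>real)\<times>real. norm (fst p) \<le> snd p}"
      by (intro closed_Collect_le continuous_intros)
    moreover have "closed {p::(real\<times>real)\<times>real. snd p \<le> r}"
      by (intro closed_Collect_le continuous_intros)
    ultimately have Sb[measurable]: "S \<in> sets borel" unfolding S_def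
      by (intro sets.Int borel_open borel_closed)
    have "F = (\<lambda>p. indicator S p * ennreal (g (snd p)))"
      by (auto simp: F_def S_def indicator_def fun_eq_iff)
    moreover have gs[measurable]: "(\<lambda>p::(real\<times>real)\<times>real. g (snd p)) \<in> borel_measurable borel"
      unfolding g_def by (intro borel_measurable_continuous_onI continuous_intros)
    moreover have "(\<lambda>p::(real\<times>real)\<times>real. indicator S p * ennreal (g (snd p))) \<in> borel_measurable borel"
      by measurable
    ultimately show ?thesis by (simp add: lborel_prod)
  qed
  have Fm2[measurable]: "(\<lambda>w. \<integral>\<^sup>+s. F (w, s) \<partial>lborel) \<in> borel_measurable lborel"
    using lborel.borel_measurable_nn_integral_fst[OF Fm] .
  have Fm3: "(\<lambda>w. \<integral>\<^sup>+s. indicator (ball (0::real\<times>real) r) w * ennreal (g s) * indicator {norm w..r} s \<partial>lborel) \<in> borel_measurable lborel"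
    using Fm2 by (simp add: F_def)
  have Bm: "(\<lambda>w. indicator (ball (0::real\<times>real) r) w * ennreal \<epsilon>) \<in> borel_measurable lborel"
    by (intro borel_measurable_times_ennreal borel_measurable_indicator) auto
  have "(\<integral>\<^sup>+w. ennreal (psi r w) \<partial>lborel) = (\<integral>\<^sup>+w. indicator (ball (0::real\<times>real) r) w * ennreal \<epsilon> \<partial>lborel)
      + (\<integral>\<^sup>+w. (\<integral>\<^sup>+s. indicator (ball (0::real\<times>real) r) w * ennreal (g s) * indicator {norm w..r} s \<partial>lborel) \<partial>lborel)"
  proof -
    have "(\<integral>\<^sup>+w. ennreal (psi r w) \<partial>lborel) = (\<integral>\<^sup>+w. indicator (ball (0::real\<times>real) r) w * ennreal \<epsilon>
      + (\<integral>\<^sup>+s. indicator (ball (0::real\<times>real) r) w * ennreal (g s) * indicator {norm w..r} s \<partial>lborel) \<partial>lborel)"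
      by (intro nn_integral_cong step1)
    also have "\<dots> = (\<integral>\<^sup>+w. indicator (ball (0::real\<times>real) r) w * ennreal \<epsilon> \<partial>lborel)
      + (\<integral>\<^sup>+w. (\<integral>\<^sup>+s. indicator (ball (0::real\<times>real) r) w * ennreal (g s) * indicator {norm w..r} s \<partial>lborel) \<partial>lborel)"
      by (rule nn_integral_add[OF Bm Fm3])
    finally show ?thesis .
  qed
  also have "(\<integral>\<^sup>+w. indicator (ball (0::real\<times>real) r) w * ennreal \<epsilon> \<partial>lborel) = ennreal (\<epsilon> * (pi * r^2))"
  proof -
    have "(\<integral>\<^sup>+w. indicator (ball (0::real\<times>real) r) w * ennreal \<epsilon> \<partial>lborel) = ennreal \<epsilon> * emeasure lborel (ball (0::real\<times>real) r)"
      by (subst mult.commute, rule nn_integral_cmult_indicator) simp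
    also have "\<dots> = ennreal (\<epsilon> * (pi * r^2))"
      using r by (simp add: emeasure_ball2 ennreal_mult \<epsilon>_def)
    finally show ?thesis .
  qed
  also have "(\<integral>\<^sup>+w. (\<integral>\<^sup>+s. indicator (ball (0::real\<times>real) r) w * ennreal (g s) * indicator {norm w..r} s \<partial>lborel) \<partial>lborel)
      = (\<integral>\<^sup>+s. (\<integral>\<^sup>+w. indicator (ball (0::real\<times>real) r) w * ennreal (g s) * indicator {norm w..r} s \<partial>lborel) \<partial>lborel)"
    using lborel_pair.Fubini[OF Fm] by (simp add: F_def)
  also have "\<dots> = (\<integral>\<^sup>+s. ennreal (g s * (pi * s^2)) * indicator {0..r} s \<partial>lborel)"
  proof (rule nn_integral_cong)
    fix s :: real
    have "(\<integral>\<^sup>+w. indicator (ball (0::real\<times>real) r) w * ennreal (g s) * indicator {norm w..r} s \<partial>lborel)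
        = (\<integral>\<^sup>+w. (ennreal (g s) * indicator {0..r} s) * indicator (ball 0 r \<inter> cball (0::real\<times>real) s) w \<partial>lborel)"
      by (rule nn_integral_cong) (auto simp: indicator_def intro: order_trans[OF norm_ge_zero])
    also have "\<dots> = ennreal (g s) * indicator {0..r} s * emeasure lborel (ball 0 r \<inter> cball (0::real\<times>real) s)"
      by (rule nn_integral_cmult_indicator) auto
    also have "\<dots> = ennreal (g s * (pi * s^2)) * indicator {0..r} s"
    proof (cases "s \<in> {0..r}")
      case False then show ?thesis by simp
    next
      case True
      have "emeasure lborel (ball 0 r \<inter> cball (0::real\<times>real) s) = ennreal (pi * s^2)"
      proof (cases "s = r")
        case True then have "ball 0 r \<inter> cball (0::real\<times>real) s = ball 0 s" by auto
        then show ?thesis using r True by (simp add: emeasure_ball2)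
      next
        case False then have "ball 0 r \<inter> cball (0::real\<times>real) s = cball 0 s" using \<open>s \<in> {0..r}\<close> by auto
        then show ?thesis using \<open>s \<in> {0..r}\<close> by (simp add: emeasure_cball2)
      qed
      moreover have "g s \<ge> 0" using True a unfolding g_def by auto
      ultimately show ?thesis using True by (simp add: ennreal_mult)
    qed
    finally show "(\<integral>\<^sup>+w. indicator (ball (0::real\<times>real) r) w * ennreal (g s) * indicator {norm w..r} s \<partial>lborel)
        = ennreal (g s * (pi * s^2)) * indicator {0..r} s" .
  qed
  also have "\<dots> = ennreal ((\<lambda>s. - pi * (s^2 + 1/a) * exp (- a * s^2)) r - (\<lambda>s. - pi * (s^2 + 1/a) * exp (- a * s^2)) 0)"
  proof (rule nn_integral_FTC_Icc)
    show "(\<lambda>s. g s * (pi * s^2)) \<in> borel_measurable borel" by measurable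
    fix x assume x: "x \<in> {0..r}"
    show "((\<lambda>s. - pi * (s^2 + 1/a) * exp (- a * s^2)) has_real_derivative g x * (pi * x^2)) (at x)"
      unfolding g_def using a by (auto intro!: derivative_eq_intros simp: algebra_simps power2_eq_square field_simps)
    show "0 \<le> g x * (pi * x^2)" using x a unfolding g_def by auto
  qed (use r in simp)
  also have "ennreal (\<epsilon> * (pi * r^2)) + \<dots> = ennreal (2 * (1 - exp (- pi * r^2 / 2)))"
  proof -
    have e: "exp (- a * r^2) \<le> 1" using a by simp
    have "\<epsilon> * (pi * r^2) + ((- pi * (r^2 + 1/a) * exp (- a * r^2)) - (- pi * (0^2 + 1/a) * exp (- a * 0^2)))
        = 2 * (1 - exp (- pi * r^2 / 2))"
      unfolding \<epsilon>_def a_def by (simp add: field_simps)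
    moreover have "0 \<le> \<epsilon> * (pi * r^2)" by (simp add: \<epsilon>_def)
    moreover have "0 \<le> (- pi * (r^2 + 1/a) * exp (- a * r^2)) - (- pi * (0^2 + 1/a) * exp (- a * 0^2))"
    proof -
      have "pi * (r^2 + 1/a) * exp (- a * r^2) \<le> pi * (1/a)"
      proof -
        have "(r^2 + 1/a) * exp (- a * r^2) \<le> 1/a"
        proof -
          have "1 + a * r^2 \<le> exp (a * r^2)" by (rule exp_ge_add_one_self)
          then have "(1 + a * r^2) * exp (- a * r^2) \<le> 1"
            by (simp add: exp_minus field_simps)
          moreover have "(r^2 + 1/a) * exp (- a * r^2) = ((1 + a * r^2) * exp (- a * r^2)) / a"
            using a by (simp add: field_simps)
          ultimately show ?thesis using a by (simp add: divide_right_mono)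
        qed
        from mult_left_mono[OF this, of pi] show ?thesis by (simp add: mult.assoc)
      qed
      then show ?thesis by simp
    qed
    ultimately show ?thesis by (simp add: ennreal_plus[symmetric] del: ennreal_plus)
  qed
  finally show ?thesis .
qed

lemma integral_psi:
  assumes r: "r > 0"
  shows "(\<integral>w. psi r w \<partial>lborel) = 2 * (1 - exp (- pi * r^2 / 2))"
proof -
  have "(\<integral>w. psi r w \<partial>lborel) = enn2real (\<integral>\<^sup>+w. ennreal (psi r w) \<partial>lborel)"
  proof (rule integral_eq_nn_integral)
    show "AE x in lborel. 0 \<le> psi r x" by (rule AE_I2) (simp add: psi_def)
  qed simp
  also have "\<dots> = 2 * (1 - exp (- pi * r^2 / 2))"
    using r by (simp add: nn_integral_psi)
  finally show ?thesis .
qed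

lemma integral_psi_ge:
  assumes r: "r > 0"
  shows "(\<integral>w. psi r w \<partial>lborel) \<ge> 1 - exp (- pi * r^2)"
proof -
  define x where "x = exp (- pi * r^2 / 2)"
  have "exp (- pi * r^2) = x^2" unfolding x_def by (simp add: power2_eq_square exp_add[symmetric])
  moreover have "0 \<le> (1 - x)^2" by simp
  ultimately have "1 - exp (- pi * r^2) \<le> 2 * (1 - x)" by (simp add: power2_eq_square algebra_simps)
  then show ?thesis using integral_psi[OF r] by (simp add: x_def)
qed



definition stft_int :: "(real \<Rightarrow> complex) \<Rightarrow> real \<times> real \<Rightarrow> real \<Rightarrow> complex" where
  "stft_int f z t = f t * cnj (complex_of_real (gwin (t - fst z)))
                 * exp (- 2 * pi * \<i> * complex_of_real (snd z * t))"

lemma STFT_eq: "STFT f z = (LINT t|lborel. stft_int f z t)"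
  unfolding STFT_def stft_int_def ..

definition kern :: "real \<Rightarrow> real \<Rightarrow> complex \<Rightarrow> complex" where
  "kern x0 t \<zeta> = exp (complex_of_real (2*pi*(t-x0)) * \<zeta> - complex_of_real pi * \<zeta>^2 / 2)"

definition Eph :: "real \<Rightarrow> real \<times> real \<Rightarrow> complex" where
  "Eph x0 w = exp (complex_of_real (- pi * (norm w)^2 / 2)
     + \<i> * complex_of_real (- pi * fst w * snd w - 2*pi * snd w * x0))"

lemma norm_Eph: "norm (Eph x0 w) = exp (- pi * (norm w)^2 / 2)"
  unfolding Eph_def by (simp add: norm_exp_eq_Re)

lemma kern0: "kern x0 t 0 = 1" by (simp add: kern_def)

lemma kern_holo: "kern x0 t holomorphic_on UNIV"
  unfolding kern_def by (intro holomorphic_intros) auto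

lemma stft_shift:
  "stft_int f (x0 + u, \<omega>0 + v) t = Eph x0 (u, v) * (stft_int f (x0, \<omega>0) t * kern x0 t (zeta (u, v)))"
proof -
  have n2: "(norm (u, v))^2 = u^2 + v^2" by (simp add: norm_Pair)
  have g: "complex_of_real (gwin s) = complex_of_real (2 powr (1/4)) * exp (complex_of_real (- pi * s^2))" for s
  proof -
    have e: "exp (complex_of_real (- pi * s^2)) = complex_of_real (exp (- pi * s^2))" by (rule exp_of_real)
    show ?thesis unfolding gwin_def e by simp
  qed
  have gc: "cnj (complex_of_real (gwin s)) = complex_of_real (2 powr (1/4)) * exp (complex_of_real (- pi * s^2))" for s
    by (subst complex_cnj_complex_of_real) (rule g)
  define A where "A = complex_of_real (- pi * (t - (x0+u))^2) + (- 2 * pi * \<i> * complex_of_real ((\<omega>0 + v) * t))"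
  define B where "B = complex_of_real (- pi * (t - x0)^2) + (- 2 * pi * \<i> * complex_of_real (\<omega>0 * t))"
  define C where "C = complex_of_real (2*pi*(t-x0)) * zeta (u,v) - complex_of_real pi * (zeta (u,v))^2 / 2"
  define E where "E = complex_of_real (- pi * (norm (u,v))^2 / 2)
     + \<i> * complex_of_real (- pi * u * v - 2 * pi * v * x0)"
  have ABC: "A = E + (B + C)"
    unfolding A_def B_def C_def E_def n2 zeta_def
    by (simp add: complex_eq_iff power2_eq_square algebra_simps field_simps)
  have "stft_int f (x0 + u, \<omega>0 + v) t = f t * complex_of_real (2 powr (1/4)) * exp A"
    by (simp only: stft_int_def gc A_def exp_add fst_conv snd_conv) (simp add: mult_ac)
  also have "\<dots> = f t * complex_of_real (2 powr (1/4)) * (exp E * (exp B * exp C))"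
    by (simp add: ABC exp_add)
  also have "\<dots> = Eph x0 (u, v) * (stft_int f (x0, \<omega>0) t * kern x0 t (zeta (u, v)))"
    by (simp only: stft_int_def gc B_def C_def E_def Eph_def kern_def exp_add fst_conv snd_conv) (simp add: mult_ac)
  finally show ?thesis .
qed


definition win :: "real \<times> real \<Rightarrow> real \<Rightarrow> complex" where
  "win z t = cnj (complex_of_real (gwin (t - fst z))) * exp (- 2 * pi * \<i> * complex_of_real (snd z * t))"

lemma stft_int_win: "stft_int f z t = f t * win z t"
  by (simp add: stft_int_def win_def mult.assoc)

lemma win_cont: "continuous_on UNIV (\<lambda>p::(real\<times>real)\<times>real. win (fst p) (snd p))"
  unfolding win_def gwin_def by (intro continuous_intros)

lemma win_measurable[measurable]: "(\<lambda>p. win (fst p) (snd p)) \<in> borel_measurable (lborel \<Otimes>\<^sub>M lborel)"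
  using borel_measurable_continuous_onI[OF win_cont] by (simp add: lborel_prod)

lemma win_measurable1[measurable]: "win z \<in> borel_measurable lborel"
proof -
  have "continuous_on UNIV (win z)" unfolding win_def gwin_def by (intro continuous_intros)
  then show ?thesis using borel_measurable_continuous_onI by simp
qed

lemma stft_int_measurable[measurable]:
  assumes [measurable]: "f \<in> borel_measurable lborel"
  shows "(\<lambda>p. stft_int f (fst p) (snd p)) \<in> borel_measurable (lborel \<Otimes>\<^sub>M lborel)"
  unfolding stft_int_win by measurable

lemma STFT_measurable[measurable]:
  assumes [measurable]: "f \<in> borel_measurable lborel"
  shows "STFT f \<in> borel_measurable lborel"
proof -
  have "(\<lambda>z. LINT t|lborel. stft_int f z t) \<in> borel_measurable lborel"
    using stft_int_measurable[OF assms] by (intro lborel.borel_measurable_lebesgue_integral) simp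
  then show ?thesis by (simp add: STFT_eq[abs_def])
qed

lemma norm_win: "norm (win z t) = gwin (t - fst z)"
proof -
  have "gwin (t - fst z) \<ge> 0" by (simp add: gwin_def)
  moreover have "norm (exp (- 2 * pi * \<i> * complex_of_real (snd z * t))) = 1"
    by (simp add: norm_exp_eq_Re)
  ultimately show ?thesis by (simp add: win_def norm_mult)
qed

lemma gauss_int: "integrable lborel (\<lambda>(t::real). exp (- ((t - x0)^2) / 2))"
proof -
  have "integrable lborel (\<lambda>t. sqrt (2 * pi) * normal_density x0 1 t)"
    by (intro integrable_mult_right integrable_normal_density) simp
  moreover have "sqrt (2 * pi) * normal_density x0 1 t = exp (- ((t - x0)^2) / 2)" for t
    by (simp add: normal_density_def)
  ultimately show ?thesis by simp
qed

lemma L2_bound_int: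
  fixes f :: "real \<Rightarrow> complex"
  assumes fm[measurable]: "f \<in> borel_measurable lborel" and f2: "integrable lborel (\<lambda>t. (norm (f t))^2)"
    and c: "c \<ge> 0"
  shows "integrable lborel (\<lambda>t. norm (f t) * exp (- pi * (t - x0)^2 + c * abs (t - x0)))"
proof (rule Bochner_Integration.integrable_bound[where f="\<lambda>t. ((norm (f t))^2 + exp (c^2 / pi) * exp (- ((t - x0)^2) / 2)) / 2"])
  show "integrable lborel (\<lambda>t. ((norm (f t))^2 + exp (c^2 / pi) * exp (- ((t - x0)^2) / 2)) / 2)"
    using f2 gauss_int[of x0] by (intro integrable_divide integrable_add integrable_mult_right) auto
  show "(\<lambda>t. norm (f t) * exp (- pi * (t - x0)^2 + c * abs (t - x0))) \<in> borel_measurable lborel"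
    by measurable
  show "AE t in lborel. norm (norm (f t) * exp (- pi * (t - x0)^2 + c * abs (t - x0)))
     \<le> norm (((norm (f t))^2 + exp (c^2 / pi) * exp (- ((t - x0)^2) / 2)) / 2)"
  proof (rule AE_I2)
    fix t :: real
    define s where "s = t - x0"
    define H where "H = exp (- pi * s^2 + c * abs s)"
    have key: "2 * pi * c * abs s \<le> pi^2 * s^2 + c^2"
    proof -
      have "0 \<le> (pi * abs s - c)^2" by simp
      then show ?thesis by (simp add: power2_eq_square algebra_simps)
    qed
    have key2: "2 * c * abs s \<le> pi * s^2 + c^2 / pi"
    proof -
      have "2 * c * abs s = (2 * pi * c * abs s) / pi" by simp
      also have "\<dots> \<le> (pi^2 * s^2 + c^2) / pi" using key by (intro divide_right_mono) auto
      also have "\<dots> = pi * s^2 + c^2 / pi" by (simp add: power2_eq_square field_simps)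
      finally show ?thesis .
    qed
    have p: "pi * s^2 \<ge> s^2 / 2"
    proof -
      have "s^2 / 2 \<le> 1 * s^2" by simp
      also have "\<dots> \<le> pi * s^2" using pi_gt3 by (intro mult_right_mono) auto
      finally show ?thesis .
    qed
    have "H^2 = exp (2 * (- pi * s^2 + c * abs s))"
      unfolding H_def by (simp add: power2_eq_square exp_add[symmetric])
    also have "\<dots> \<le> exp (c^2 / pi + (- (s^2) / 2))"
      using key2 p by simp
    also have "\<dots> = exp (c^2 / pi) * exp (- (s^2) / 2)" by (subst exp_add[symmetric]) simp
    finally have H2: "H^2 \<le> exp (c^2 / pi) * exp (- (s^2) / 2)" .
    have "norm (f t) * H \<le> ((norm (f t))^2 + H^2) / 2"
    proof -
      have "0 \<le> (norm (f t) - H)^2" by simp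
      then show ?thesis by (simp add: power2_eq_square algebra_simps)
    qed
    also have "\<dots> \<le> ((norm (f t))^2 + exp (c^2 / pi) * exp (- (s^2) / 2)) / 2"
      using H2 by simp
    finally show "norm (norm (f t) * exp (- pi * (t - x0)^2 + c * abs (t - x0)))
     \<le> norm (((norm (f t))^2 + exp (c^2 / pi) * exp (- ((t - x0)^2) / 2)) / 2)"
      by (simp add: H_def s_def)
  qed
qed



lemma psi_rot: "c^2 + s^2 = 1 \<Longrightarrow> psi r (rot c s w) = psi r w"
  by (simp add: psi_def norm_rot indicator_def)

lemma psi_le1: "\<bar>psi r w\<bar> \<le> 1"
  by (simp add: psi_def indicator_def)

lemma psi_nonneg: "psi r w \<ge> 0"
  by (simp add: psi_def)

lemma psi_supp: "psi r w \<noteq> 0 \<Longrightarrow> norm w \<le> r"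
  by (auto simp: psi_def indicator_def)

lemma psi_measurable_lborel[measurable]: "psi r \<in> borel_measurable lborel"
  using psi_measurable by simp

lemma kern_measurable[measurable]:
  "(\<lambda>p::(real\<times>real)\<times>real. kern x0 (snd p) (zeta (fst p))) \<in> borel_measurable (lborel \<Otimes>\<^sub>M lborel)"
proof -
  have "continuous_on UNIV (\<lambda>p::(real\<times>real)\<times>real. kern x0 (snd p) (zeta (fst p)))"
    unfolding kern_def zeta_def by (intro continuous_intros) auto
  then show ?thesis using borel_measurable_continuous_onI by (simp add: lborel_prod)
qed

lemma norm_kern_bound:
  assumes "norm w \<le> r"
  shows "norm (kern x0 t (zeta w)) \<le> exp (2*pi*r * abs (t - x0) + pi * r^2 / 2)"
proof -
  obtain u v where w: "w = (u, v)" by (cases w)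
  have u: "abs u \<le> r" and v: "v^2 \<le> r^2"
  proof -
    have n: "norm w = sqrt (u^2 + v^2)" by (simp add: w norm_Pair)
    have "abs u = sqrt (u^2)" by simp
    also have "\<dots> \<le> sqrt (u^2 + v^2)" by simp
    finally have "abs u \<le> sqrt (u^2 + v^2)" .
    then show "abs u \<le> r" using assms n by linarith
    have "v^2 \<le> u^2 + v^2" by simp
    also have "\<dots> = (norm w)^2" by (simp add: n)
    also have "\<dots> \<le> r^2" using assms by (intro power_mono) auto
    finally show "v^2 \<le> r^2" .
  qed
  have re: "Re (complex_of_real (2*pi*(t-x0)) * zeta w - complex_of_real pi * (zeta w)^2 / 2)
      = 2*pi*(t-x0)*u - pi * (u^2 - v^2) / 2"
    by (simp add: zeta_def w power2_eq_square algebra_simps)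
  have a: "2*pi*(t-x0)*u \<le> 2*pi*r * abs (t - x0)"
  proof -
    have "(t-x0)*u \<le> abs (t-x0) * abs u" by (metis abs_ge_self abs_mult)
    also have "\<dots> \<le> abs (t-x0) * r" using u by (intro mult_left_mono) auto
    finally have "(t-x0)*u \<le> abs (t-x0) * r" .
    then have "(2*pi) * ((t-x0)*u) \<le> (2*pi) * (abs (t-x0) * r)" by (intro mult_left_mono) auto
    then show ?thesis by (simp add: algebra_simps)
  qed
  have b: "- pi * (u^2 - v^2) / 2 \<le> pi * r^2 / 2"
  proof -
    have "u^2 - v^2 \<ge> - (r^2)" using v by (smt (verit) zero_le_power2)
    then have "pi * (u^2 - v^2) \<ge> pi * (- (r^2))" by (intro mult_left_mono) auto
    then show ?thesis by simp
  qed
  show ?thesis unfolding kern_def norm_exp_eq_Re re exp_le_cancel_iff using a b by linarith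
qed

lemma translate_integral:
  fixes F :: "real\<times>real \<Rightarrow> real"
  assumes [measurable]: "F \<in> borel_measurable borel"
  shows "(\<integral>w. F w \<partial>lborel) = (\<integral>w. F (z0 + w) \<partial>lborel)"
proof -
  have "(\<integral>w. F w \<partial>lborel) = (\<integral>w. F w \<partial>distr lborel borel ((+) z0))"
    by (simp add: lborel_distr_plus)
  also have "\<dots> = (\<integral>w. F (z0 + w) \<partial>lborel)"
    by (rule integral_distr) auto
  finally show ?thesis .
qed

lemma translate_integrable:
  fixes F :: "real\<times>real \<Rightarrow> real"
  assumes [measurable]: "F \<in> borel_measurable borel" and "integrable lborel F"
  shows "integrable lborel (\<lambda>w. F (z0 + w))"
proof -
  have "integrable (distr lborel borel ((+) z0)) F"
    using assms(2) by (simp add: lborel_distr_plus)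
  then show ?thesis by (subst (asm) integrable_distr_eq) auto
qed



lemma cnj_sgn_mult: "cnj (sgn z) * z = complex_of_real (norm z)"
proof (cases "z = 0")
  case True then show ?thesis by simp
next
  case False
  have "cnj (sgn z) * z = (z * cnj z) / complex_of_real (norm z)"
    by (simp add: sgn_div_norm scaleR_conv_of_real field_simps mult.commute)
  also have "z * cnj z = complex_of_real ((norm z)^2)" using complex_norm_square[of z] by simp
  finally show ?thesis using False by (simp add: power2_eq_square)
qed

lemma KL:
  assumes fM: "f \<in> M1" and r: "r > 0"
  shows "(1 - exp (- pi * r^2)) * norm (STFT f z0) \<le> (\<integral>w. indicator (ball z0 r) w * norm (STFT f w) \<partial>lborel)"
proof -
  from fM have fm[measurable]: "f \<in> borel_measurable lborel"
    and f2: "integrable lborel (\<lambda>t. (norm (f t))^2)"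
    and Nleb: "integrable lebesgue (\<lambda>z. norm (STFT f z))" by (auto simp: M1_def)
  have Vm[measurable]: "STFT f \<in> borel_measurable lborel" by (rule STFT_measurable[OF fm])
  have Vmb[measurable]: "STFT f \<in> borel_measurable borel" using Vm by simp
  have Nmb[measurable]: "(\<lambda>x. norm (STFT f x)) \<in> borel_measurable borel"
    using Vmb by measurable
  have ballb[measurable]: "ball z0 r \<in> sets borel" by simp
  have Nint: "integrable lborel (\<lambda>z. norm (STFT f z))"
    using Nleb by (subst (asm) integrable_completion) auto
  obtain x0 \<omega>0 where z0: "z0 = (x0, \<omega>0)" by (cases z0)
  define q where "q = stft_int f (x0, \<omega>0)"
  have qm[measurable]: "q \<in> borel_measurable lborel" unfolding q_def stft_int_win by measurable
  define G where "G = (\<lambda>\<zeta>. LINT t|lborel. q t * kern x0 t \<zeta>)"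
  have VG: "STFT f (z0 + w) = Eph x0 w * G (zeta w)" for w
  proof -
    obtain u v where w: "w = (u, v)" by (cases w)
    have "STFT f (z0 + w) = (LINT t|lborel. stft_int f (x0 + u, \<omega>0 + v) t)"
      by (simp add: STFT_eq z0 w)
    also have "\<dots> = (LINT t|lborel. Eph x0 (u, v) * (q t * kern x0 t (zeta (u, v))))"
      by (simp add: stft_shift q_def)
    also have "\<dots> = Eph x0 w * G (zeta w)" by (simp add: G_def w)
    finally show ?thesis .
  qed
  have V0: "STFT f z0 = G 0" by (simp add: G_def kern0 STFT_eq q_def z0)
  have NG: "norm (STFT f (z0 + w)) = exp (- pi * (norm w)^2 / 2) * norm (G (zeta w))" for w
    by (simp add: VG norm_mult norm_Eph)
  define B where "B = (\<lambda>t. 2 powr (1/4) * exp (pi * r^2 / 2) * (norm (f t) * exp (- pi * (t - x0)^2 + (2*pi*r) * abs (t - x0))))"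
  have Bint: "integrable lborel B" unfolding B_def
    using L2_bound_int[OF fm f2, of "2*pi*r" x0] r by (intro integrable_mult_right) simp
  have Bm[measurable]: "B \<in> borel_measurable lborel" using Bint by (rule borel_measurable_integrable)
  have Bnn: "B t \<ge> 0" for t by (simp add: B_def)
  have bound: "norm (q t * kern x0 t (zeta w)) \<le> B t" if "norm w \<le> r" for t w
  proof -
    have "norm (q t * kern x0 t (zeta w)) = norm (f t) * gwin (t - x0) * norm (kern x0 t (zeta w))"
      by (simp add: q_def stft_int_win norm_mult norm_win)
    also have "\<dots> \<le> norm (f t) * gwin (t - x0) * exp (2*pi*r * abs (t - x0) + pi * r^2 / 2)"
      using norm_kern_bound[OF that] by (intro mult_left_mono) (auto simp: gwin_def)
    also have "\<dots> = B t"
      by (simp add: B_def gwin_def exp_add[symmetric] mult_ac)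
    finally show ?thesis .
  qed
  define \<Psi> where "\<Psi> = (\<lambda>p::(real\<times>real)\<times>real. psi r (fst p) *\<^sub>R (q (snd p) * kern x0 (snd p) (zeta (fst p))))"
  have \<Psi>m[measurable]: "\<Psi> \<in> borel_measurable (lborel \<Otimes>\<^sub>M lborel)" unfolding \<Psi>_def by measurable
  have \<Psi>int: "integrable (lborel \<Otimes>\<^sub>M lborel) \<Psi>"
  proof (rule Bochner_Integration.integrable_bound[where f="\<lambda>p. indicator (cball (0::real\<times>real) r) (fst p) * B (snd p)"])
    show "integrable (lborel \<Otimes>\<^sub>M lborel) (\<lambda>p. indicator (cball (0::real\<times>real) r) (fst p) * B (snd p))"
    proof (rule lborel_pair.Fubini_integrable)
      have cb[measurable]: "cball (0::real\<times>real) r \<in> sets borel" by simp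
      have [measurable]: "(\<lambda>x. B (snd x)) \<in> borel_measurable (lborel \<Otimes>\<^sub>M lborel)"
        by (rule measurable_compose[OF measurable_snd Bm])
      show "(\<lambda>p. indicator (cball (0::real\<times>real) r) (fst p) * B (snd p)) \<in> borel_measurable (lborel \<Otimes>\<^sub>M lborel)"
        by measurable
      have "(\<lambda>x. \<integral>y. norm (indicator (cball (0::real\<times>real) r) (fst (x, y)) * B (snd (x, y))) \<partial>lborel)
          = (\<lambda>x. indicator (cball (0::real\<times>real) r) x * (\<integral>y. B y \<partial>lborel))"
        by (rule ext) (simp add: Bnn abs_mult)
      moreover have "integrable lborel (\<lambda>x. indicator (cball (0::real\<times>real) r) x * (\<integral>y. B y \<partial>lborel))"
        using emeasure_bounded_finite[of "cball (0::real\<times>real) r"]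
        by (intro integrable_mult_left integrable_real_indicator) auto
      ultimately show "integrable lborel (\<lambda>x. \<integral>y. norm (indicator (cball (0::real\<times>real) r) (fst (x, y)) * B (snd (x, y))) \<partial>lborel)"
        by simp
      show "AE x in lborel. integrable lborel (\<lambda>y. indicator (cball (0::real\<times>real) r) (fst (x, y)) * B (snd (x, y)))"
        using Bint by (intro AE_I2) simp
    qed
    show "AE p in lborel \<Otimes>\<^sub>M lborel. norm (\<Psi> p) \<le> norm (indicator (cball (0::real\<times>real) r) (fst p) * B (snd p))"
    proof (rule AE_I2)
      fix p :: "(real\<times>real)\<times>real"
      show "norm (\<Psi> p) \<le> norm (indicator (cball (0::real\<times>real) r) (fst p) * B (snd p))"
      proof (cases "psi r (fst p) = 0")
        case True then show ?thesis by (simp add: \<Psi>_def)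
      next
        case False
        then have nw: "norm (fst p) \<le> r" by (rule psi_supp)
        have "norm (\<Psi> p) = \<bar>psi r (fst p)\<bar> * norm (q (snd p) * kern x0 (snd p) (zeta (fst p)))"
          by (simp add: \<Psi>_def)
        also have "\<dots> \<le> 1 * B (snd p)"
          using psi_le1 bound[OF nw] by (intro mult_mono) auto
        finally show ?thesis using nw Bnn by (simp add: dist_norm)
      qed
    qed
  qed (rule \<Psi>m)
  have in_t: "(\<integral>t. \<Psi> (w, t) \<partial>lborel) = psi r w *\<^sub>R G (zeta w)" for w
    by (simp add: \<Psi>_def G_def)
  have in_w: "(\<integral>w. \<Psi> (w, t) \<partial>lborel) = q t * complex_of_real (\<integral>w. psi r w \<partial>lborel)" for t
  proof -
    have "(\<integral>w. \<Psi> (w, t) \<partial>lborel) = (\<integral>w. q t * (psi r w *\<^sub>R kern x0 t (zeta w)) \<partial>lborel)"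
      by (simp add: \<Psi>_def)
    also have "\<dots> = q t * (\<integral>w. psi r w *\<^sub>R kern x0 t (zeta w) \<partial>lborel)"
      by (rule integral_mult_right_zero)
    also have "(\<integral>w. psi r w *\<^sub>R kern x0 t (zeta w) \<partial>lborel) = (\<integral>w. psi r w \<partial>lborel) *\<^sub>R kern x0 t 0"
      by (rule disc_mean[OF kern_holo psi_rot psi_measurable psi_supp psi_le1])
    finally show ?thesis by (simp add: kern0 scaleR_conv_of_real)
  qed
  define c' where "c' = (\<integral>w. psi r w \<partial>lborel)"
  have "(\<integral>w. psi r w *\<^sub>R G (zeta w) \<partial>lborel) = (\<integral>w. (\<integral>t. \<Psi> (w, t) \<partial>lborel) \<partial>lborel)"
    by (simp add: in_t)
  also have "\<dots> = (\<integral>t. (\<integral>w. \<Psi> (w, t) \<partial>lborel) \<partial>lborel)"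
    using lborel_pair.Fubini_integral[of "\<lambda>w t. \<Psi> (w, t)"] \<Psi>int by simp
  also have "\<dots> = (\<integral>t. q t * complex_of_real c' \<partial>lborel)" by (simp add: in_w c'_def)
  also have "\<dots> = G 0 * complex_of_real c'" by (simp add: G_def kern0)
  finally have I: "(\<integral>w. psi r w *\<^sub>R G (zeta w) \<partial>lborel) = complex_of_real c' * STFT f z0"
    by (simp add: V0 mult.commute)
  have PGint: "integrable lborel (\<lambda>w. psi r w *\<^sub>R G (zeta w))"
    using lborel_pair.integrable_fst'[OF \<Psi>int] by (simp add: in_t)
  define \<sigma> where "\<sigma> = cnj (sgn (STFT f z0))"
  have \<sigma>1: "norm \<sigma> \<le> 1" by (simp add: \<sigma>_def norm_sgn)
  have \<sigma>V: "\<sigma> * STFT f z0 = complex_of_real (norm (STFT f z0))"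
    unfolding \<sigma>_def by (rule cnj_sgn_mult)
  have "(\<integral>w. indicator (ball z0 r) w * norm (STFT f w) \<partial>lborel)
      = (\<integral>w. indicator (ball z0 r) (z0 + w) * norm (STFT f (z0 + w)) \<partial>lborel)"
    by (rule translate_integral) measurable
  also have "\<dots> = (\<integral>w. psi r w * norm (G (zeta w)) \<partial>lborel)"
    by (rule Bochner_Integration.integral_cong) (auto simp: NG psi_def indicator_def dist_norm)
  also have "\<dots> \<ge> (\<integral>w. Re (\<sigma> * (psi r w *\<^sub>R G (zeta w))) \<partial>lborel)"
  proof (rule integral_mono)
    show "integrable lborel (\<lambda>w. Re (\<sigma> * (psi r w *\<^sub>R G (zeta w))))"
      using PGint by (intro integrable_Re integrable_mult_right)
    have "integrable lborel (\<lambda>w. indicator (ball z0 r) (z0 + w) * norm (STFT f (z0 + w)))"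
    proof -
      have "integrable lborel (\<lambda>w. indicator (ball z0 r) w * norm (STFT f w))"
        using integrable_mult_indicator[OF _ Nint, of "ball z0 r"] by simp
      then show ?thesis by (rule translate_integrable[rotated]) measurable
    qed
    then show "integrable lborel (\<lambda>w. psi r w * norm (G (zeta w)))"
      by (rule Bochner_Integration.integrable_cong[THEN iffD1, rotated -1]) (auto simp: NG psi_def indicator_def dist_norm)
    fix w
    have "Re (\<sigma> * (psi r w *\<^sub>R G (zeta w))) \<le> norm (\<sigma> * (psi r w *\<^sub>R G (zeta w)))"
      by (rule complex_Re_le_cmod)
    also have "\<dots> = norm \<sigma> * (psi r w * norm (G (zeta w)))"
      using psi_nonneg[of r w] by (simp add: norm_mult)
    also have "\<dots> \<le> 1 * (psi r w * norm (G (zeta w)))"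
      using \<sigma>1 psi_nonneg[of r w] by (intro mult_right_mono) auto
    finally show "Re (\<sigma> * (psi r w *\<^sub>R G (zeta w))) \<le> psi r w * norm (G (zeta w))" by simp
  qed
  also have "(\<integral>w. Re (\<sigma> * (psi r w *\<^sub>R G (zeta w))) \<partial>lborel) = Re (\<sigma> * (\<integral>w. psi r w *\<^sub>R G (zeta w) \<partial>lborel))"
  proof -
    have int2: "integrable lborel (\<lambda>w. \<sigma> * (psi r w *\<^sub>R G (zeta w)))"
      using PGint by (rule integrable_mult_right)
    have "(\<integral>w. Re (\<sigma> * (psi r w *\<^sub>R G (zeta w))) \<partial>lborel) = Re (\<integral>w. \<sigma> * (psi r w *\<^sub>R G (zeta w)) \<partial>lborel)"
      by (rule integral_Re[OF int2])
    also have "(\<integral>w. \<sigma> * (psi r w *\<^sub>R G (zeta w)) \<partial>lborel) = \<sigma> * (\<integral>w. psi r w *\<^sub>R G (zeta w) \<partial>lborel)"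
      by (rule integral_mult_right_zero)
    finally show ?thesis .
  qed
  also have "\<dots> = c' * norm (STFT f z0)"
    unfolding I using \<sigma>V by (simp add: mult.left_commute[of \<sigma>])
  finally have main: "c' * norm (STFT f z0) \<le> (\<integral>w. indicator (ball z0 r) w * norm (STFT f w) \<partial>lborel)" .
  have "(1 - exp (- pi * r^2)) * norm (STFT f z0) \<le> c' * norm (STFT f z0)"
    using integral_psi_ge[OF r] by (intro mult_right_mono) (auto simp: c'_def)
  then show ?thesis using main by linarith
qed



lemma measure_ball2: "r \<ge> 0 \<Longrightarrow> measure lebesgue (ball (c::real\<times>real) r) = pi * r^2"
proof -
  assume r: "r \<ge> 0"
  have "emeasure lborel (ball c r) = ennreal (pi * r^2)"
    using emeasure_ball[of r c] r by (simp add: uv2 power2_eq_square)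
  then have "measure lborel (ball c r) = pi * r^2" using r by (simp add: measure_def)
  then show ?thesis by simp
qed

lemma rho_ge:
  assumes D: "D \<in> sets lebesgue" and R: "R > 0"
  shows "measure lebesgue (D \<inter> ball z (1/R)) \<le> nyquist_rho D R"
proof -
  have "measure lebesgue (D \<inter> ball x (1/R)) \<le> pi * (1/R)^2" for x :: "real\<times>real"
  proof -
    have "measure lebesgue (D \<inter> ball x (1/R)) \<le> measure lebesgue (ball x (1/R))"
      using D by (intro measure_mono_fmeasurable) (auto intro!: bounded_set_imp_lmeasurable)
    then show ?thesis using R measure_ball2[of "1/R" x] by simp
  qed
  then have "bdd_above ((\<lambda>z. measure lebesgue (D \<inter> ball z (1/R))) ` UNIV)"
    by (intro bdd_aboveI2) auto
  then show ?thesis unfolding nyquist_rho_def by (intro cSUP_upper) auto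
qed

lemma rho_nonneg: "D \<in> sets lebesgue \<Longrightarrow> R > 0 \<Longrightarrow> nyquist_rho D R \<ge> 0"
  using rho_ge[of D R 0] by (meson measure_nonneg order_trans)

lemma main_bound:
  assumes fM: "f \<in> M1" and L1: "L1norm_STFT f = 1" and D: "D \<in> sets lebesgue" and R: "R > 0"
  shows "(LINT z:D|lebesgue. norm (STFT f z)) \<le> nyquist_rho D R / (1 - exp (- pi / R^2))"
proof -
  define r where "r = 1 / R"
  have r: "r > 0" using R by (simp add: r_def)
  define c where "c = 1 - exp (- pi * r^2)"
  have c: "c > 0" using r by (simp add: c_def)
  have cR: "1 - exp (- pi / R^2) = c" by (simp add: c_def r_def power_divide)
  define \<rho> where "\<rho> = nyquist_rho D R"
  have \<rho>0: "\<rho> \<ge> 0" using rho_nonneg[OF D R] by (simp add: \<rho>_def)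
  from fM have fm[measurable]: "f \<in> borel_measurable lborel"
    and Nleb: "integrable lebesgue (\<lambda>z. norm (STFT f z))" by (auto simp: M1_def)
  have Vm[measurable]: "STFT f \<in> borel_measurable lborel" by (rule STFT_measurable[OF fm])
  have Nm[measurable]: "(\<lambda>z. norm (STFT f z)) \<in> borel_measurable lborel" by measurable
  have Nint: "integrable lborel (\<lambda>z. norm (STFT f z))"
    using Nleb by (subst (asm) integrable_completion) auto
  have N1: "(\<integral>z. norm (STFT f z) \<partial>lborel) = 1"
    using L1 unfolding L1norm_STFT_def by (subst (asm) integral_completion) auto
  define D' where "D' = main_part lborel D"
  have D'm[measurable]: "D' \<in> sets lborel" using main_part_sets[OF D] by (simp add: D'_def)
  have DD': "D = D' \<union> null_part lborel D" using D by (simp add: D'_def)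
  obtain N0 where N0: "N0 \<in> null_sets lborel" "null_part lborel D \<subseteq> N0" using null_part[OF D] by auto
  have eqI: "(LINT z:D|lebesgue. norm (STFT f z)) = (\<integral>z. indicator D' z * norm (STFT f z) \<partial>lborel)"
  proof -
    have "(LINT z:D|lebesgue. norm (STFT f z)) = (\<integral>z. indicator D z * norm (STFT f z) \<partial>lebesgue)"
      by (simp add: set_lebesgue_integral_def)
    also have "\<dots> = (\<integral>z. indicator D' z * norm (STFT f z) \<partial>lebesgue)"
    proof (rule integral_cong_AE)
      show "(\<lambda>z. indicator D z * norm (STFT f z)) \<in> borel_measurable lebesgue"
        using D by (intro borel_measurable_times borel_measurable_indicator) (auto intro: measurable_completion)
      show "(\<lambda>z. indicator D' z * norm (STFT f z)) \<in> borel_measurable lebesgue"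
        using D'm by (intro borel_measurable_times borel_measurable_indicator) (auto intro: measurable_completion)
      have "AE z in lborel. z \<notin> N0" using N0(1) by (rule AE_not_in)
      then have "AE z in lebesgue. z \<notin> N0" by (rule AE_completion)
      then show "AE z in lebesgue. indicator D z * norm (STFT f z) = indicator D' z * norm (STFT f z)"
      proof (rule eventually_mono)
        fix z assume "z \<notin> N0"
        then have "z \<notin> null_part lborel D" using N0(2) by auto
        then have "indicator D z = (indicator D' z :: real)" using DD'
          by (metis Un_iff indicator_simps)
        then show "indicator D z * norm (STFT f z) = indicator D' z * norm (STFT f z)" by simp
      qed
    qed
    also have "\<dots> = (\<integral>z. indicator D' z * norm (STFT f z) \<partial>lborel)"
      by (rule integral_completion) measurable
    finally show ?thesis .
  qed
  define I where "I = (\<integral>z. indicator D' z * norm (STFT f z) \<partial>lborel)"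
  have Iint: "integrable lborel (\<lambda>z. indicator D' z * norm (STFT f z))"
    using integrable_mult_indicator[OF D'm Nint] by simp
  have rhoD': "emeasure lborel (D' \<inter> ball w r) \<le> ennreal \<rho>" for w
  proof -
    have fin: "emeasure lborel (D' \<inter> ball w r) < \<infinity>"
      by (intro emeasure_bounded_finite) auto
    have "measure lborel (D' \<inter> ball w r) = measure lebesgue (D' \<inter> ball w r)"
      by (rule measure_completion[symmetric]) (use D'm in simp)
    also have "\<dots> \<le> measure lebesgue (D \<inter> ball w (1/R))"
    proof (rule measure_mono_fmeasurable)
      show "D' \<inter> ball w r \<subseteq> D \<inter> ball w (1/R)" using DD' by (auto simp: r_def)
      have "D' \<inter> ball w r \<in> sets lborel" using D'm by simp
      then show "D' \<inter> ball w r \<in> sets lebesgue" by (rule sets_completionI_sets)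
      show "D \<inter> ball w (1/R) \<in> fmeasurable lebesgue"
        using D by (intro bounded_set_imp_lmeasurable) auto
    qed
    also have "\<dots> \<le> \<rho>" unfolding \<rho>_def by (rule rho_ge[OF D R])
    finally have "measure lborel (D' \<inter> ball w r) \<le> \<rho>" .
    then show ?thesis using fin by (simp add: emeasure_eq_ennreal_measure ennreal_leI)
  qed
  define F where "F = (\<lambda>p::(real\<times>real)\<times>(real\<times>real). indicator D' (fst p) * ennreal (indicator (ball (fst p) r) (snd p) * norm (STFT f (snd p))))"
  have Fm: "F \<in> borel_measurable (lborel \<Otimes>\<^sub>M lborel)"
  proof -
    have op: "open {p::(real\<times>real)\<times>(real\<times>real). dist (fst p) (snd p) < r}"
      by (intro open_Collect_less continuous_intros)
    have S[measurable]: "{p::(real\<times>real)\<times>(real\<times>real). dist (fst p) (snd p) < r} \<in> sets (lborel \<Otimes>\<^sub>M lborel)"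
      by (subst lborel_prod) (use borel_open[OF op] in simp)
    have "F = (\<lambda>p. indicator D' (fst p) * ennreal (indicator {p::(real\<times>real)\<times>(real\<times>real). dist (fst p) (snd p) < r} p * norm (STFT f (snd p))))"
      by (auto simp: F_def indicator_def fun_eq_iff)
    also have "\<dots> \<in> borel_measurable (lborel \<Otimes>\<^sub>M lborel)" by measurable
    finally show ?thesis .
  qed
  have "ennreal (c * I) = (\<integral>\<^sup>+z. ennreal (c * (indicator D' z * norm (STFT f z))) \<partial>lborel)"
    unfolding I_def using Iint c
    by (subst nn_integral_eq_integral) (auto intro!: integrable_mult_right)
  also have "\<dots> \<le> (\<integral>\<^sup>+z. (\<integral>\<^sup>+w. F (z, w) \<partial>lborel) \<partial>lborel)"
  proof (rule nn_integral_mono)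
    fix z :: "real\<times>real"
    show "ennreal (c * (indicator D' z * norm (STFT f z))) \<le> (\<integral>\<^sup>+w. F (z, w) \<partial>lborel)"
    proof (cases "z \<in> D'")
      case False then show ?thesis by simp
    next
      case True
      have int2: "integrable lborel (\<lambda>w. indicator (ball z r) w * norm (STFT f w))"
        using integrable_mult_indicator[OF _ Nint, of "ball z r"] by simp
      have "ennreal (c * (indicator D' z * norm (STFT f z))) = ennreal (c * norm (STFT f z))"
        using True by simp
      also have "\<dots> \<le> ennreal (\<integral>w. indicator (ball z r) w * norm (STFT f w) \<partial>lborel)"
        using KL[OF fM r, of z] by (intro ennreal_leI) (simp add: c_def)
      also have "\<dots> = (\<integral>\<^sup>+w. ennreal (indicator (ball z r) w * norm (STFT f w)) \<partial>lborel)"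
        using int2 by (subst nn_integral_eq_integral) auto
      also have "\<dots> = (\<integral>\<^sup>+w. F (z, w) \<partial>lborel)"
        using True by (simp add: F_def)
      finally show ?thesis .
    qed
  qed
  also have "\<dots> = (\<integral>\<^sup>+w. (\<integral>\<^sup>+z. F (z, w) \<partial>lborel) \<partial>lborel)"
    using lborel_pair.Fubini[OF Fm] by simp
  also have "\<dots> \<le> (\<integral>\<^sup>+w. ennreal (norm (STFT f w)) * ennreal \<rho> \<partial>lborel)"
  proof (rule nn_integral_mono)
    fix w :: "real\<times>real"
    have "(\<integral>\<^sup>+z. F (z, w) \<partial>lborel) = (\<integral>\<^sup>+z. ennreal (norm (STFT f w)) * indicator (D' \<inter> ball w r) z \<partial>lborel)"
      by (rule nn_integral_cong) (auto simp: F_def indicator_def dist_commute)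
    also have "\<dots> = ennreal (norm (STFT f w)) * emeasure lborel (D' \<inter> ball w r)"
      by (rule nn_integral_cmult_indicator) (use D'm in simp)
    also have "\<dots> \<le> ennreal (norm (STFT f w)) * ennreal \<rho>"
      by (intro mult_left_mono rhoD') auto
    finally show "(\<integral>\<^sup>+z. F (z, w) \<partial>lborel) \<le> ennreal (norm (STFT f w)) * ennreal \<rho>" .
  qed
  also have "\<dots> = (\<integral>\<^sup>+w. ennreal (norm (STFT f w)) \<partial>lborel) * ennreal \<rho>"
    by (rule nn_integral_multc) measurable
  also have "(\<integral>\<^sup>+w. ennreal (norm (STFT f w)) \<partial>lborel) = ennreal 1"
    using Nint N1 by (subst nn_integral_eq_integral) auto
  finally have "ennreal (c * I) \<le> ennreal \<rho>" by simp
  then have "c * I \<le> \<rho>" using \<rho>0 by (simp add: ennreal_le_iff)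
  then have "I \<le> \<rho> / c" using c by (simp add: pos_le_divide_eq mult.commute)
  then have "I \<le> \<rho> / (1 - exp (- pi / R^2))" by (simp only: cR)
  then show ?thesis using eqI by (simp add: I_def \<rho>_def)
qed



theorem corollary3:
  fixes f :: "real \<Rightarrow> complex" and D :: "(real \<times> real) set" and \<epsilon> :: real
  assumes "f \<in> M1" and "L1norm_STFT f = 1"
    and "D \<in> sets lebesgue" and "\<epsilon> \<ge> 0"
    and "1 - \<epsilon> \<le> (LINT z:D|lebesgue. norm (STFT f z))"
  shows "ereal (1 - \<epsilon>) \<le> (INF R\<in>{0<..}. ereal (nyquist_rho D R / (1 - exp (- pi / R^2))))
     \<and> (INF R\<in>{0<..}. ereal (nyquist_rho D R / (1 - exp (- pi / R^2))))
         \<le> enn2ereal (emeasure lebesgue D)"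
proof
  show "ereal (1 - \<epsilon>) \<le> (INF R\<in>{0<..}. ereal (nyquist_rho D R / (1 - exp (- pi / R^2))))"
  proof (rule INF_greatest)
    fix R :: real assume "R \<in> {0<..}"
    then have R: "R > 0" by simp
    have "1 - \<epsilon> \<le> nyquist_rho D R / (1 - exp (- pi / R^2))"
      using assms(5) main_bound[OF assms(1,2,3) R] by linarith
    then show "ereal (1 - \<epsilon>) \<le> ereal (nyquist_rho D R / (1 - exp (- pi / R^2)))" by simp
  qed
next
  have D: "D \<in> sets lebesgue" by (rule assms(3))
  show "(INF R\<in>{0<..}. ereal (nyquist_rho D R / (1 - exp (- pi / R^2)))) \<le> enn2ereal (emeasure lebesgue D)"
  proof (cases "emeasure lebesgue D = \<infinity>")
    case True then show ?thesis by simp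
  next
    case False
    define m where "m = measure lebesgue D"
    have m0: "m \<ge> 0" by (simp add: m_def)
    have em: "emeasure lebesgue D = ennreal m"
      using False by (simp add: m_def emeasure_eq_ennreal_measure)
    have Dfm: "D \<in> fmeasurable lebesgue"
      using D False by (intro fmeasurableI) (auto simp: less_top)
    have rho_le: "nyquist_rho D R \<le> m" for R
      unfolding nyquist_rho_def
    proof (rule cSUP_least)
      fix z :: "real\<times>real"
      show "measure lebesgue (D \<inter> ball z (1/R)) \<le> m"
        unfolding m_def using D Dfm by (intro measure_mono_fmeasurable) auto
    qed simp
    have "(INF R\<in>{0<..}. ereal (nyquist_rho D R / (1 - exp (- pi / R^2)))) \<le> ereal m"
    proof (rule ereal_le_epsilon2)
      fix e :: real assume e: "0 < e"
      define T where "T = max 1 (ln ((m + e) / e))"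
      have T1: "T \<ge> 1" by (simp add: T_def)
      define R where "R = sqrt (pi / T)"
      have R: "R > 0" using T1 by (simp add: R_def)
      have RT: "pi / R^2 = T" using T1 by (simp add: R_def)
      define x where "x = exp (- T)"
      have x1: "x < 1" using T1 by (simp add: x_def)
      have xe: "x \<le> e / (m + e)"
      proof -
        have pos: "(m + e) / e > 0" using e m0 by simp
        have "x \<le> exp (- ln ((m + e) / e))" unfolding x_def T_def by simp
        also have "\<dots> = e / (m + e)" using pos by (simp add: exp_minus exp_ln)
        finally show ?thesis .
      qed
      have \<rho>0: "nyquist_rho D R \<ge> 0" by (rule rho_nonneg[OF D R])
      have "nyquist_rho D R / (1 - x) \<le> m / (1 - x)"
        using rho_le[of R] x1 by (intro divide_right_mono) auto
      also have "\<dots> \<le> m + e"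
      proof -
        have "(m + e) * x \<le> e" using xe e m0 by (simp add: field_simps)
        then have "m \<le> (m + e) * (1 - x)" by (simp add: algebra_simps)
        then show ?thesis using x1 by (simp add: pos_divide_le_eq)
      qed
      finally have le: "nyquist_rho D R / (1 - exp (- pi / R^2)) \<le> m + e"
        by (simp add: RT x_def)
      have "(INF R\<in>{0<..}. ereal (nyquist_rho D R / (1 - exp (- pi / R^2))))
          \<le> ereal (nyquist_rho D R / (1 - exp (- pi / R^2)))"
        using R by (intro INF_lower) simp
      also have "\<dots> \<le> ereal m + ereal e" using le by simp
      finally show "(INF R\<in>{0<..}. ereal (nyquist_rho D R / (1 - exp (- pi / R^2)))) \<le> ereal m + ereal e" .
    qed
    then show ?thesis using em m0 by simp
  qed
qed

end
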